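(* Let $V$ be a finite set of variables and let $p$ be a probability distribution over $V$ faithful to an LWF chain graph $G$ with vertex set $V$, with all conditional independence queries answered correctly according to $p$. Then at the end of the skeleton recovery phase of the PC-like algorithm PC4LWF, the undirected graph $H$ has exactly the same adjacencies as $G$ (i.e. $H$ is the skeleton of $G$).
   Context: An LWF chain graph (CG) is a graph on a finite vertex set with directed ($\to$) and undirected ($-$) edges, at most one edge between two vertices, and no partially directed cycle (a cycle $v_1,\dots,v_n,v_{n+1}\equiv v_1$, $n\ge3$, of distinct vertices with each step $v_i-v_{i+1}$ or $v_i\to v_{i+1}$ and at least one step directed). Chain components are the connected components after deleting directed edges. $bd(A)$ is the set of parents or neighbours of vertices of $A$ outside $A$; $An(A)$ is the smallest set $B\supseteq A$ with $bd(b)\subseteq B$ for all $b\in B$. The moral graph $G^m$ joins $\alpha,\beta$ iff they are adjacent in $G$ or $\alpha\to\gamma_1$, $\beta\to\gamma_2$ for some $\gamma_1,\gamma_2$ in one chain component. For disjoint $A,B,S$, $S$ c-separates $A$ from $B$ if it separates them in $(G_{An(A\cup B\cup S)})^m$. $p$ is faithful to $G$ if $A\perp\!\!\!\perp B\mid S$ in $p$ iff $S$ c-separates $A$ from $B$ in $G$. Skeleton recovery of PC4LWF: let $H$ be the complete undirected graph on $V$. For $i=0,1,\dots,|V|-2$: while possible, select any ordered pair $(u,v)$ of vertices adjacent in the current $H$ with $|ad_H(u)\setminus\{v\}|\ge i$, where $ad_H(x)$ is the current set of vertices adjacent to $x$ in $H$; if there exists $S\subseteq ad_H(u)\setminus\{v\}$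 with $|S|=i$ and $u\perp\!\!\!\perp v\mid S$ in $p$, set $S_{uv}=S_{vu}=S$ and remove the edge $u-v$ from $H$. *)

theory Defs
  imports Main
begin

(* A chain graph on vertex set V is given by a set D of directed edges
   ((u,v) \<in> D means u \<rightarrow> v) and a symmetric set U of undirected edges
   ((u,v) \<in> U and (v,u) \<in> U both mean u - v). *)

definition has_pd_cycle :: "('a \<times> 'a) set \<Rightarrow> ('a \<times> 'a) set \<Rightarrow> bool" where
  "has_pd_cycle D U \<longleftrightarrow>
     (\<exists>vs. length vs \<ge> 3 \<and> distinct vs \<and>
        (\<forall>i<length vs. (vs!i, vs!((i+1) mod length vs)) \<in> U \<or>
                         (vs!i, vs!((i+1) mod length vs)) \<in> D) \<and>
        (\<exists>i<length vs. (vs!i, vs!((i+1) mod length vs)) \<in> D))"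

definition lwf_cg :: "'a set \<Rightarrow> ('a \<times> 'a) set \<Rightarrow> ('a \<times> 'a) set \<Rightarrow> bool" where
  "lwf_cg V D U \<longleftrightarrow>
     D \<subseteq> V \<times> V \<and> U \<subseteq> V \<times> V \<and> sym U \<and>
     (\<forall>v. (v,v) \<notin> D \<and> (v,v) \<notin> U) \<and>
     (\<forall>u v. (u,v) \<in> D \<longrightarrow> (v,u) \<notin> D \<and> (u,v) \<notin> U) \<and>
     \<not> has_pd_cycle D U"

definition bd :: "('a \<times> 'a) set \<Rightarrow> ('a \<times> 'a) set \<Rightarrow> 'a set \<Rightarrow> 'a set" where
  "bd D U A = {b. b \<notin> A \<and> (\<exists>a\<in>A. (b,a) \<in> D \<or> (b,a) \<in> U)}"

definition An :: "('a \<times> 'a) set \<Rightarrow> ('a \<times> 'a) set \<Rightarrow> 'a set \<Rightarrow> 'a set" where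
  "An D U A = \<Inter>{B. A \<subseteq> B \<and> (\<forall>b\<in>B. bd D U {b} \<subseteq> B)}"

text \<open>Edge set of the moral graph of the chain graph (W, D, U); gamma1, gamma2 lie
  in one chain component iff they are connected by undirected edges.\<close>
definition moral_edges :: "'a set \<Rightarrow> ('a \<times> 'a) set \<Rightarrow> ('a \<times> 'a) set \<Rightarrow> ('a \<times> 'a) set" where
  "moral_edges W D U = {(a,b). a \<in> W \<and> b \<in> W \<and> a \<noteq> b \<and>
      ((a,b) \<in> D \<or> (b,a) \<in> D \<or> (a,b) \<in> U \<or>
       (\<exists>g1 g2. (a,g1) \<in> D \<and> (b,g2) \<in> D \<and> (g1,g2) \<in> U\<^sup>*))}"

definition separates :: "('a \<times> 'a) set \<Rightarrow> 'a set \<Rightarrow> 'a set \<Rightarrow> 'a set \<Rightarrow> bool" where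
  "separates E S A B \<longleftrightarrow>
     (\<forall>a\<in>A. \<forall>b\<in>B. (a,b) \<notin> (E \<inter> ((- S) \<times> (- S)))\<^sup>*)"

definition c_separates :: "('a \<times> 'a) set \<Rightarrow> ('a \<times> 'a) set \<Rightarrow> 'a set \<Rightarrow> 'a set \<Rightarrow> 'a set \<Rightarrow> bool" where
  "c_separates D U A B S \<longleftrightarrow>
     (let W = An D U (A \<union> B \<union> S)
      in separates (moral_edges W (D \<inter> (W \<times> W)) (U \<inter> (W \<times> W))) S A B)"

text \<open>Faithfulness of the conditional independence relation CI (CI A B S means
  A is independent of B given S in p) to the chain graph (V,D,U).\<close>
definition faithful :: "'a set \<Rightarrow> ('a \<times> 'a) set \<Rightarrow> ('a \<times> 'a) set \<Rightarrow>
                       ('a set \<Rightarrow> 'a set \<Rightarrow> 'a set \<Rightarrow> bool) \<Rightarrow> bool" where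
  "faithful V D U CI \<longleftrightarrow>
     (\<forall>A B S. A \<subseteq> V \<and> B \<subseteq> V \<and> S \<subseteq> V \<and> A \<inter> B = {} \<and> A \<inter> S = {} \<and> B \<inter> S = {} \<longrightarrow>
        (CI A B S \<longleftrightarrow> c_separates D U A B S))"

text \<open>Skeleton recovery of PC4LWF. H is a symmetric edge set.\<close>
definition adj :: "('a \<times> 'a) set \<Rightarrow> 'a \<Rightarrow> 'a set" where
  "adj H x = {y. (x,y) \<in> H}"

definition complete_graph :: "'a set \<Rightarrow> ('a \<times> 'a) set" where
  "complete_graph V = {(u,v). u \<in> V \<and> v \<in> V \<and> u \<noteq> v}"

text \<open>One iteration of the while loop at level i. The state is (H, T), T being the
  ordered pairs already selected at this level.\<close>
inductive level_step :: "('a set \<Rightarrow> 'a set \<Rightarrow> 'a set \<Rightarrow> bool) \<Rightarrow> nat \<Rightarrow>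
    ('a \<times> 'a) set \<times> ('a \<times> 'a) set \<Rightarrow> ('a \<times> 'a) set \<times> ('a \<times> 'a) set \<Rightarrow> bool"
  for CI i where
  remove: "\<lbrakk> (u,v) \<in> H; (u,v) \<notin> T; card (adj H u - {v}) \<ge> i;
            S \<subseteq> adj H u - {v}; card S = i; CI {u} {v} S \<rbrakk>
           \<Longrightarrow> level_step CI i (H, T) (H - {(u,v),(v,u)}, insert (u,v) T)"
| keep: "\<lbrakk> (u,v) \<in> H; (u,v) \<notin> T; card (adj H u - {v}) \<ge> i;
          \<not> (\<exists>S. S \<subseteq> adj H u - {v} \<and> card S = i \<and> CI {u} {v} S) \<rbrakk>
           \<Longrightarrow> level_step CI i (H, T) (H, insert (u,v) T)"

definition level_done :: "nat \<Rightarrow> ('a \<times> 'a) set \<Rightarrow> ('a \<times> 'a) set \<Rightarrow> bool" where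
  "level_done i H T \<longleftrightarrow> (\<forall>u v. (u,v) \<in> H \<and> card (adj H u - {v}) \<ge> i \<longrightarrow> (u,v) \<in> T)"

definition level_run :: "('a set \<Rightarrow> 'a set \<Rightarrow> 'a set \<Rightarrow> bool) \<Rightarrow> nat \<Rightarrow>
    ('a \<times> 'a) set \<Rightarrow> ('a \<times> 'a) set \<Rightarrow> bool" where
  "level_run CI i H H' \<longleftrightarrow>
     (\<exists>T. (level_step CI i)\<^sup>*\<^sup>* (H, {}) (H', T) \<and> level_done i H' T)"

text \<open>skel_run V CI k H: H is a possible state after levels 0, ..., k-1.\<close>
inductive skel_run :: "'a set \<Rightarrow> ('a set \<Rightarrow> 'a set \<Rightarrow> 'a set \<Rightarrow> bool) \<Rightarrow> nat \<Rightarrow>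
    ('a \<times> 'a) set \<Rightarrow> bool"
  for V CI where
  init: "skel_run V CI 0 (complete_graph V)"
| level: "\<lbrakk> skel_run V CI k H; level_run CI k H H' \<rbrakk> \<Longrightarrow> skel_run V CI (Suc k) H'"

text \<open>Possible outputs of the skeleton phase: levels i = 0, ..., |V| - 2.\<close>
definition pc4lwf_skeleton :: "'a set \<Rightarrow> ('a set \<Rightarrow> 'a set \<Rightarrow> 'a set \<Rightarrow> bool) \<Rightarrow>
    ('a \<times> 'a) set \<Rightarrow> bool" where
  "pc4lwf_skeleton V CI H \<longleftrightarrow> skel_run V CI (card V - 1) H"

end

theory Submission
  imports Defs "HOL-Library.Transitive_Closure_Table"
begin

lemma path_nth:
  "rtrancl_path r x xs y \<Longrightarrow> i < length xs \<Longrightarrow> r ((x#xs)!i) (xs!i)"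
proof (induction arbitrary: i rule: rtrancl_path.induct)
  case (base x) then show ?case by simp
next
  case (step x y ys z)
  then show ?case by (cases i) auto
qed

lemma path_last:
  "rtrancl_path r x xs y \<Longrightarrow> xs \<noteq> [] \<Longrightarrow> last xs = y"
proof (induction rule: rtrancl_path.induct)
  case (base x) then show ?case by simp
next
  case (step x y ys z)
  then show ?case by (cases ys) (auto elim: rtrancl_path.cases)
qed

lemma no_cycle:
  assumes lwf: "lwf_cg V D U" and ug: "(u,g) \<in> D" and gu: "(g,u) \<in> (D \<union> U)\<^sup>*"
  shows False
proof -
  let ?r = "\<lambda>a b. (a,b) \<in> D \<union> U"
  have "?r\<^sup>*\<^sup>* g u" using gu by (simp add: rtranclp_rtrancl_eq del: Un_iff)
  then obtain xs0 where "rtrancl_path ?r g xs0 u" by (auto simp: rtranclp_eq_rtrancl_path)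
  then obtain xs where p: "rtrancl_path ?r g xs u" and dis: "distinct (g # xs)"
    by (rule rtrancl_path_distinct)
  have irr: "\<And>v. (v,v) \<notin> D" and asy: "\<And>a b. (a,b) \<in> D \<Longrightarrow> (b,a) \<notin> D \<and> (a,b) \<notin> U"
    and symU: "sym U" and nc: "\<not> has_pd_cycle D U"
    using lwf unfolding lwf_cg_def by auto
  have "g \<noteq> u" using ug irr by auto
  then have ne: "xs \<noteq> []" using p by (auto elim: rtrancl_path.cases)
  have lst: "last xs = u" using path_last[OF p ne] .
  have len2: "length xs \<ge> 2"
  proof (rule ccontr)
    assume "\<not> length xs \<ge> 2"
    with ne obtain y where xy: "xs = [y]" by (cases xs) (auto simp: Suc_le_eq)
    with lst have "y = u" by simp
    with path_nth[OF p, of 0] xy have "(g,u) \<in> D \<union> U" by simp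
    moreover have "(u,g) \<notin> U" using asy[OF ug] by auto
    ultimately show False using asy[OF ug] symU by (auto dest: symD)
  qed
  let ?vs = "g # xs"
  have "has_pd_cycle D U"
    unfolding has_pd_cycle_def
  proof (intro exI[of _ ?vs] conjI)
    show "3 \<le> length ?vs" using len2 by simp
    show "distinct ?vs" by fact
    have lastv: "?vs ! length xs = u" using lst ne by (simp add: last_conv_nth)
    show "\<forall>i<length ?vs. (?vs!i, ?vs!((i+1) mod length ?vs)) \<in> U \<or>
                         (?vs!i, ?vs!((i+1) mod length ?vs)) \<in> D"
    proof (intro allI impI)
      fix i assume i: "i < length ?vs"
      show "(?vs!i, ?vs!((i+1) mod length ?vs)) \<in> U \<or> (?vs!i, ?vs!((i+1) mod length ?vs)) \<in> D"
      proof (cases "i < length xs")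
        case True
        then have "(i+1) mod length ?vs = i + 1" by simp
        then show ?thesis using path_nth[OF p True] by auto
      next
        case False
        then have "i = length xs" using i by simp
        then show ?thesis using lastv ug by simp
      qed
    qed
    show "\<exists>i<length ?vs. (?vs!i, ?vs!((i+1) mod length ?vs)) \<in> D"
      using lastv ug by (intro exI[of _ "length xs"]) simp
  qed
  with nc show False by simp
qed

definition skel :: "('a \<times> 'a) set \<Rightarrow> ('a \<times> 'a) set \<Rightarrow> ('a \<times> 'a) set" where
  "skel D U = {(u,v). (u,v) \<in> D \<or> (v,u) \<in> D \<or> (u,v) \<in> U}"

definition Pa :: "('a \<times> 'a) set \<Rightarrow> ('a \<times> 'a) set \<Rightarrow> 'a \<Rightarrow> 'a set" where
  "Pa D U u = {b. (b,u) \<in> D \<or> (b,u) \<in> U}"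

definition good :: "('a \<times> 'a) set \<Rightarrow> ('a \<times> 'a) set \<Rightarrow> 'a \<Rightarrow> 'a \<Rightarrow> bool" where
  "good D U u v \<longleftrightarrow> \<not> (\<exists>c. (u,c) \<in> D \<and> (c,v) \<in> (D \<union> U)\<^sup>*)"

lemma An_sub: "An D U A \<subseteq> {x. \<exists>a\<in>A. (x,a) \<in> (D \<union> U)\<^sup>*}"
  unfolding An_def
proof (rule Inter_lower, safe)
  fix a assume "a \<in> A" then show "\<exists>b\<in>A. (a,b) \<in> (D \<union> U)\<^sup>*" by blast
next
  fix b c a assume "a \<in> A" "(b,a) \<in> (D \<union> U)\<^sup>*" "c \<in> bd D U {b}"
  then show "\<exists>a\<in>A. (c,a) \<in> (D \<union> U)\<^sup>*"
    unfolding bd_def by (auto intro: converse_rtrancl_into_rtrancl)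
qed

lemma An_sup: "A \<subseteq> An D U A"
  unfolding An_def by blast

lemma good_or:
  assumes "lwf_cg V D U" shows "good D U u v \<or> good D U v u"
proof (rule ccontr)
  assume "\<not> ?thesis"
  then obtain c c' where 1: "(u,c) \<in> D" "(c,v) \<in> (D \<union> U)\<^sup>*" and 2: "(v,c') \<in> D" "(c',u) \<in> (D \<union> U)\<^sup>*"
    unfolding good_def by blast
  have "(c,u) \<in> (D \<union> U)\<^sup>*"
    using 1(2) 2 by (meson UnI1 rtrancl.rtrancl_into_rtrancl rtrancl_trans)
  with no_cycle[OF assms 1(1)] show False by blast
qed

lemma sep:
  assumes lwf: "lwf_cg V D U" and uv: "u \<noteq> v" and nv: "v \<notin> Pa D U u"
    and g: "good D U u v"
  shows "c_separates D U {u} {v} (Pa D U u)"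
proof -
  define S where "S = Pa D U u"
  define W where "W = An D U ({u} \<union> {v} \<union> S)"
  define E where "E = moral_edges W (D \<inter> (W \<times> W)) (U \<inter> (W \<times> W))"
  have symU: "sym U" using lwf unfolding lwf_cg_def by auto
  have nochild: "\<And>c. (u,c) \<in> D \<Longrightarrow> c \<notin> W"
  proof
    fix c assume uc: "(u,c) \<in> D" and "c \<in> W"
    have sub: "An D U ({u} \<union> {v} \<union> S) \<subseteq> {x. \<exists>a\<in>{u} \<union> {v} \<union> S. (x,a) \<in> (D \<union> U)\<^sup>*}"
      by (rule An_sub)
    have "c \<in> An D U ({u} \<union> {v} \<union> S)" using \<open>c \<in> W\<close> unfolding W_def .
    then have "c \<in> {x. \<exists>a\<in>{u} \<union> {v} \<union> S. (x,a) \<in> (D \<union> U)\<^sup>*}"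
      using sub by (rule subsetD[rotated])
    then obtain a where a: "a \<in> {u} \<union> {v} \<union> S" "(c,a) \<in> (D \<union> U)\<^sup>*"
      by (rule CollectE) (erule bexE, blast)
    from a(1) have "a = u \<or> a = v \<or> a \<in> S" by auto
    then show False
    proof (elim disjE)
      assume "a = u" then show False using no_cycle[OF lwf uc] a(2) by simp
    next
      assume "a = v" then show False using g uc a(2) unfolding good_def by blast
    next
      assume "a \<in> S" then have "(a,u) \<in> D \<union> U" unfolding S_def Pa_def by simp
      then have "(c,u) \<in> (D \<union> U)\<^sup>*" using a(2) by (rule rtrancl.rtrancl_into_rtrancl[rotated])
      then show False using no_cycle[OF lwf uc] by simp
    qed
  qed
  have nb: "\<And>x. (u,x) \<in> E \<Longrightarrow> x \<in> S"
  proof -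
    fix x assume "(u,x) \<in> E"
    then have "(u,x) \<in> D \<and> x \<in> W \<or> (x,u) \<in> D \<or> (u,x) \<in> U \<or> (\<exists>g1. (u,g1) \<in> D \<and> g1 \<in> W)"
      unfolding E_def moral_edges_def by blast
    moreover have "(u,x) \<in> U \<Longrightarrow> (x,u) \<in> U" using symU by (rule symD)
    ultimately show "x \<in> S" using nochild unfolding S_def Pa_def by blast
  qed
  have "(u,v) \<notin> (E \<inter> ((- S) \<times> (- S)))\<^sup>*"
  proof
    assume "(u,v) \<in> (E \<inter> ((- S) \<times> (- S)))\<^sup>*"
    then show False
    proof (cases rule: converse_rtranclE)
      case base then show ?thesis using uv by simp
    next
      case (step x) then show ?thesis using nb by blast
    qed
  qed
  then have "separates E S {u} {v}" unfolding separates_def by blast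
  then show ?thesis unfolding c_separates_def Let_def
    S_def[symmetric] W_def[symmetric] E_def[symmetric] .
qed

lemma adj_not_sep:
  assumes "(u,v) \<in> skel D U" "u \<noteq> v" "u \<notin> S" "v \<notin> S"
  shows "\<not> c_separates D U {u} {v} S"
proof -
  define W where "W = An D U ({u} \<union> {v} \<union> S)"
  define E where "E = moral_edges W (D \<inter> (W \<times> W)) (U \<inter> (W \<times> W))"
  have "u \<in> W" "v \<in> W" using An_sup[of "{u} \<union> {v} \<union> S" D U] unfolding W_def by (auto simp del: Un_insert_left Un_insert_right)
  moreover have "(u,v) \<in> D \<or> (v,u) \<in> D \<or> (u,v) \<in> U" using assms(1) unfolding skel_def by simp
  ultimately have "(u,v) \<in> E" using assms(2) unfolding E_def moral_edges_def by blast
  then have "(u,v) \<in> (E \<inter> ((- S) \<times> (- S)))\<^sup>*" using assms by (intro r_into_rtrancl) blast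
  then have "\<not> separates E S {u} {v}" unfolding separates_def by blast
  then show ?thesis unfolding c_separates_def Let_def
    W_def[symmetric] E_def[symmetric] .
qed

lemma lwf_facts:
  assumes "lwf_cg V D U"
  shows "D \<subseteq> V \<times> V" "U \<subseteq> V \<times> V" "sym U" "\<And>v. (v,v) \<notin> D" "\<And>v. (v,v) \<notin> U"
  using assms unfolding lwf_cg_def by auto

lemma skel_sym: "lwf_cg V D U \<Longrightarrow> (u,v) \<in> skel D U \<Longrightarrow> (v,u) \<in> skel D U"
  using lwf_facts(3) unfolding skel_def by (auto dest: symD)

lemma skel_complete: "lwf_cg V D U \<Longrightarrow> skel D U \<subseteq> complete_graph V"
proof
  fix p assume l: "lwf_cg V D U" and p: "p \<in> skel D U"
  obtain u v where pe: "p = (u,v)" by (cases p)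
  have "(u,v) \<in> D \<or> (v,u) \<in> D \<or> (u,v) \<in> U" using p pe unfolding skel_def by simp
  moreover note lwf_facts[OF l]
  ultimately have "u \<in> V \<and> v \<in> V \<and> u \<noteq> v" by blast
  then show "p \<in> complete_graph V" unfolding pe complete_graph_def by simp
qed

lemma faithfulD:
  assumes "faithful V D U CI" "A \<subseteq> V" "B \<subseteq> V" "S \<subseteq> V" "A \<inter> B = {}" "A \<inter> S = {}" "B \<inter> S = {}"
  shows "CI A B S \<longleftrightarrow> c_separates D U A B S"
proof -
  have "\<forall>A B S. A \<subseteq> V \<and> B \<subseteq> V \<and> S \<subseteq> V \<and> A \<inter> B = {} \<and> A \<inter> S = {} \<and> B \<inter> S = {} \<longrightarrow>
        (CI A B S \<longleftrightarrow> c_separates D U A B S)" using assms(1) unfolding faithful_def .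
  then have "A \<subseteq> V \<and> B \<subseteq> V \<and> S \<subseteq> V \<and> A \<inter> B = {} \<and> A \<inter> S = {} \<and> B \<inter> S = {} \<longrightarrow>
        (CI A B S \<longleftrightarrow> c_separates D U A B S)" by (elim allE)
  then show ?thesis using assms(2-7) by blast
qed

lemma Pa_facts:
  assumes l: "lwf_cg V D U" and nsk: "(u,v) \<notin> skel D U"
  shows "Pa D U u \<subseteq> V" "u \<notin> Pa D U u" "v \<notin> Pa D U u"
proof -
  note f = lwf_facts[OF l]
  show "Pa D U u \<subseteq> V" using f(1,2) unfolding Pa_def by blast
  show "u \<notin> Pa D U u" using f(4,5) unfolding Pa_def by blast
  have "(v,u) \<in> U \<Longrightarrow> (u,v) \<in> U" using f(3) by (rule symD)
  then show "v \<notin> Pa D U u" using nsk unfolding Pa_def skel_def by blast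
qed

lemma CI_Pa:
  assumes l: "lwf_cg V D U" and fa: "faithful V D U CI" and uv: "u \<in> V" "v \<in> V" "u \<noteq> v"
    and nsk: "(u,v) \<notin> skel D U" and g: "good D U u v"
  shows "CI {u} {v} (Pa D U u)"
proof -
  note P = Pa_facts[OF l nsk]
  have "c_separates D U {u} {v} (Pa D U u)" using sep[OF l uv(3) P(3) g] .
  moreover have "{u} \<subseteq> V" "{v} \<subseteq> V" "{u} \<inter> {v} = {}" "{u} \<inter> Pa D U u = {}" "{v} \<inter> Pa D U u = {}"
    using uv P by auto
  then have "CI {u} {v} (Pa D U u) \<longleftrightarrow> c_separates D U {u} {v} (Pa D U u)"
    using faithfulD[OF fa _ _ P(1)] by simp
  ultimately show ?thesis by simp
qed

lemma Pa_adj: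
  assumes l: "lwf_cg V D U" and sk: "skel D U \<subseteq> H" and nsk: "(u,v) \<notin> skel D U"
  shows "Pa D U u \<subseteq> adj H u - {v}"
proof
  fix b assume b: "b \<in> Pa D U u"
  have "(b,u) \<in> U \<Longrightarrow> (u,b) \<in> U" using lwf_facts(3)[OF l] by (rule symD)
  then have "(u,b) \<in> skel D U" using b unfolding Pa_def skel_def by blast
  then have "b \<in> adj H u" using sk unfolding adj_def by blast
  moreover have "b \<noteq> v" using b Pa_facts(3)[OF l nsk] by blast
  ultimately show "b \<in> adj H u - {v}" by blast
qed

lemma remove_ok:
  assumes l: "lwf_cg V D U" and fa: "faithful V D U CI" and HV: "H \<subseteq> complete_graph V"
    and uvH: "(u,v) \<in> H" and S: "S \<subseteq> adj H u - {v}" and ci: "CI {u} {v} S"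
  shows "(u,v) \<notin> skel D U"
proof
  assume sk: "(u,v) \<in> skel D U"
  have uv: "u \<in> V" "v \<in> V" "u \<noteq> v" using HV uvH unfolding complete_graph_def by auto
  have SV: "S \<subseteq> V" "u \<notin> S" "v \<notin> S" using S HV unfolding adj_def complete_graph_def by auto
  have "{u} \<subseteq> V" "{v} \<subseteq> V" "{u} \<inter> {v} = {}" "{u} \<inter> S = {}" "{v} \<inter> S = {}"
    using uv SV by auto
  then have "CI {u} {v} S \<longleftrightarrow> c_separates D U {u} {v} S"
    using faithfulD[OF fa _ _ SV(1)] by simp
  then have "c_separates D U {u} {v} S" using ci by simp
  with adj_not_sep[OF sk uv(3) SV(2,3)] show False by blast
qed

definition target :: "'a set \<Rightarrow> ('a \<times> 'a) set \<Rightarrow> ('a \<times> 'a) set \<Rightarrow> nat \<Rightarrow> 'a \<Rightarrow> 'a \<Rightarrow> bool" where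
  "target V D U k u v \<longleftrightarrow> u \<in> V \<and> v \<in> V \<and> u \<noteq> v \<and> (u,v) \<notin> skel D U \<and> good D U u v
     \<and> card (Pa D U u) = k"

definition Qinv :: "'a set \<Rightarrow> ('a \<times> 'a) set \<Rightarrow> ('a \<times> 'a) set \<Rightarrow> nat \<Rightarrow> ('a \<times> 'a) set
   \<Rightarrow> ('a \<times> 'a) set \<times> ('a \<times> 'a) set \<Rightarrow> bool" where
  "Qinv V D U k H0 st \<longleftrightarrow> (case st of (H,T) \<Rightarrow>
     skel D U \<subseteq> H \<and> H \<subseteq> H0 \<and> sym H \<and> (\<forall>u v. (u,v) \<in> T \<and> target V D U k u v \<longrightarrow> (u,v) \<notin> H))"

lemma Qstep:
  assumes l: "lwf_cg V D U" and fa: "faithful V D U CI" and fin: "finite V"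
    and H0: "H0 \<subseteq> complete_graph V"
    and st: "level_step CI k s s'" and q: "Qinv V D U k H0 s"
  shows "Qinv V D U k H0 s'"
  using st
proof cases
  case (remove u v H T S)
  have q': "skel D U \<subseteq> H" "H \<subseteq> H0" "sym H" "\<forall>a b. (a,b) \<in> T \<and> target V D U k a b \<longrightarrow> (a,b) \<notin> H"
    using q remove(1) unfolding Qinv_def by auto
  have HV: "H \<subseteq> complete_graph V" using q'(2) H0 by blast
  have n1: "(u,v) \<notin> skel D U" using remove_ok[OF l fa HV remove(3) remove(6) remove(8)] .
  have n2: "(v,u) \<notin> skel D U" using n1 skel_sym[OF l] by blast
  have "skel D U \<subseteq> H - {(u,v),(v,u)}" using q'(1) n1 n2 by blast
  moreover have "H - {(u,v),(v,u)} \<subseteq> H0" using q'(2) by blast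
  moreover have "sym (H - {(u,v),(v,u)})" using q'(3) unfolding sym_def by blast
  moreover have "\<forall>a b. (a,b) \<in> insert (u,v) T \<and> target V D U k a b \<longrightarrow> (a,b) \<notin> H - {(u,v),(v,u)}"
    using q'(4) by blast
  ultimately show ?thesis using remove(2) unfolding Qinv_def by simp
next
  case (keep u v H T)
  have q': "skel D U \<subseteq> H" "H \<subseteq> H0" "sym H" "\<forall>a b. (a,b) \<in> T \<and> target V D U k a b \<longrightarrow> (a,b) \<notin> H"
    using q keep(1) unfolding Qinv_def by auto
  have nt: "\<not> target V D U k u v"
  proof
    assume t: "target V D U k u v"
    then have tt: "u \<in> V" "v \<in> V" "u \<noteq> v" "(u,v) \<notin> skel D U" "good D U u v" "card (Pa D U u) = k"
      unfolding target_def by auto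
    have "CI {u} {v} (Pa D U u)" using CI_Pa[OF l fa tt(1-5)] .
    moreover have "Pa D U u \<subseteq> adj H u - {v}" using Pa_adj[OF l q'(1) tt(4)] .
    ultimately show False using keep(6) tt(6) by blast
  qed
  have "\<forall>a b. (a,b) \<in> insert (u,v) T \<and> target V D U k a b \<longrightarrow> (a,b) \<notin> H"
    using q'(4) nt by blast
  then show ?thesis using keep(2) q'(1-3) unfolding Qinv_def by simp
qed

lemma Qsteps:
  assumes l: "lwf_cg V D U" and fa: "faithful V D U CI" and fin: "finite V"
    and H0: "H0 \<subseteq> complete_graph V"
    and st: "(level_step CI k)\<^sup>*\<^sup>* s s'" and q: "Qinv V D U k H0 s"
  shows "Qinv V D U k H0 s'"
  using st q
proof (induction rule: rtranclp_induct)
  case base then show ?case by simp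
next
  case (step y z) then show ?case using Qstep[OF l fa fin H0] by blast
qed

definition inv :: "'a set \<Rightarrow> ('a \<times> 'a) set \<Rightarrow> ('a \<times> 'a) set \<Rightarrow> nat \<Rightarrow> ('a \<times> 'a) set \<Rightarrow> bool" where
  "inv V D U k H \<longleftrightarrow> skel D U \<subseteq> H \<and> H \<subseteq> complete_graph V \<and> sym H \<and>
     (\<forall>u v. u \<in> V \<and> v \<in> V \<and> u \<noteq> v \<and> (u,v) \<notin> skel D U \<and> good D U u v \<and> card (Pa D U u) < k
        \<longrightarrow> (u,v) \<notin> H)"

lemma inv_level:
  assumes l: "lwf_cg V D U" and fa: "faithful V D U CI" and fin: "finite V"
    and i: "inv V D U k H0" and r: "level_run CI k H0 H'"
  shows "inv V D U (Suc k) H'"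
proof -
  have i': "skel D U \<subseteq> H0" "H0 \<subseteq> complete_graph V" "sym H0"
    "\<forall>u v. u \<in> V \<and> v \<in> V \<and> u \<noteq> v \<and> (u,v) \<notin> skel D U \<and> good D U u v \<and> card (Pa D U u) < k
        \<longrightarrow> (u,v) \<notin> H0"
    using i unfolding inv_def by auto
  obtain T where st: "(level_step CI k)\<^sup>*\<^sup>* (H0, {}) (H', T)" and dn: "level_done k H' T"
    using r unfolding level_run_def by blast
  have "Qinv V D U k H0 (H0, {})" using i'(1,3) unfolding Qinv_def by simp
  then have "Qinv V D U k H0 (H', T)" using Qsteps[OF l fa fin i'(2) st] by blast
  then have q: "skel D U \<subseteq> H'" "H' \<subseteq> H0" "sym H'"
    "\<forall>u v. (u,v) \<in> T \<and> target V D U k u v \<longrightarrow> (u,v) \<notin> H'"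
    unfolding Qinv_def by auto
  have HV: "H' \<subseteq> complete_graph V" using q(2) i'(2) by blast
  have "(u,v) \<notin> H'" if t: "u \<in> V" "v \<in> V" "u \<noteq> v" "(u,v) \<notin> skel D U" "good D U u v"
     "card (Pa D U u) < Suc k" for u v
  proof (cases "card (Pa D U u) < k")
    case True then show ?thesis using i'(4) q(2) t by blast
  next
    case False
    then have ck: "card (Pa D U u) = k" using t(6) by simp
    show ?thesis
    proof
      assume uvH: "(u,v) \<in> H'"
      have fa: "finite (adj H' u - {v})"
      proof (rule finite_subset[OF _ fin])
        show "adj H' u - {v} \<subseteq> V" using HV unfolding adj_def complete_graph_def by blast
      qed
      have "Pa D U u \<subseteq> adj H' u - {v}" using Pa_adj[OF l q(1) t(4)] .
      then have "card (adj H' u - {v}) \<ge> k" using card_mono[OF fa] ck by metis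
      then have "(u,v) \<in> T" using dn uvH unfolding level_done_def by blast
      moreover have "target V D U k u v" using t ck unfolding target_def by simp
      ultimately show False using q(4) uvH by blast
    qed
  qed
  then show ?thesis using q(1,3) HV unfolding inv_def by blast
qed

lemma inv_run:
  assumes l: "lwf_cg V D U" and fa: "faithful V D U CI" and fin: "finite V"
    and r: "skel_run V CI k H"
  shows "inv V D U k H"
  using r
proof (induction rule: skel_run.induct)
  case init
  have "sym (complete_graph V)" unfolding sym_def complete_graph_def by blast
  then show ?case using skel_complete[OF l] unfolding inv_def by blast
next
  case (level k H H')
  then show ?case using inv_level[OF l fa fin] by blast
qed

theorem lemma1:
  fixes V :: "'a set" and D U :: "('a \<times> 'a) set"
    and CI :: "'a set \<Rightarrow> 'a set \<Rightarrow> 'a set \<Rightarrow> bool"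
    and H :: "('a \<times> 'a) set"
  assumes "finite V"
    and "lwf_cg V D U"
    and "faithful V D U CI"
    and "pc4lwf_skeleton V CI H"
  shows "H = {(u,v). (u,v) \<in> D \<or> (v,u) \<in> D \<or> (u,v) \<in> U}"
proof -
  note l = assms(2) and fa = assms(3) and fin = assms(1)
  have i: "inv V D U (card V - 1) H"
    using inv_run[OF l fa fin] assms(4) unfolding pc4lwf_skeleton_def by blast
  have i': "skel D U \<subseteq> H" "H \<subseteq> complete_graph V" "sym H"
    "\<forall>u v. u \<in> V \<and> v \<in> V \<and> u \<noteq> v \<and> (u,v) \<notin> skel D U \<and> good D U u v \<and> card (Pa D U u) < card V - 1
        \<longrightarrow> (u,v) \<notin> H"
    using i unfolding inv_def by auto
  have small: "card (Pa D U u) < card V - 1"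
    if t: "u \<in> V" "v \<in> V" "u \<noteq> v" "(u,v) \<notin> skel D U" for u v
  proof -
    note P = Pa_facts[OF l t(4)]
    have "Pa D U u \<subseteq> V - {u,v}" using P by blast
    then have "card (Pa D U u) \<le> card (V - {u,v})" using fin by (intro card_mono) auto
    also have "card (V - {u,v}) = card V - 2" using t fin by (simp add: card_Diff_subset)
    finally have c1: "card (Pa D U u) \<le> card V - 2" .
    have "card {u,v} \<le> card V" using t fin by (intro card_mono) auto
    then have "card V \<ge> 2" using t by simp
    with c1 show ?thesis by linarith
  qed
  have "H \<subseteq> skel D U"
  proof
    fix p assume pH: "p \<in> H"
    obtain u v where pe: "p = (u,v)" by (cases p)
    have uv: "u \<in> V" "v \<in> V" "u \<noteq> v" using pH pe i'(2) unfolding complete_graph_def by auto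
    show "p \<in> skel D U"
    proof (rule ccontr)
      assume n: "p \<notin> skel D U"
      then have n1: "(u,v) \<notin> skel D U" using pe by simp
      then have n2: "(v,u) \<notin> skel D U" using skel_sym[OF l] by blast
      have vuH: "(v,u) \<in> H" using pH pe i'(3) unfolding sym_def by blast
      from good_or[OF l, of u v] show False
      proof
        assume "good D U u v"
        then show False using i'(4) uv n1 small[OF uv n1] pH pe by blast
      next
        assume "good D U v u"
        then show False using i'(4) uv n2 small[OF uv(2,1) _ n2] vuH by blast
      qed
    qed
  qed
  with i'(1) have "H = skel D U" by blast
  then show ?thesis unfolding skel_def .
qed

end
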